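(* For any rooted tree $T$, it is possible to assign pairwise distinct binary strings $\ell(u)$ to all nodes $u\in T$ such that $$|\ell(u)|\le 2+\log_2\big(|T|/(1+\mathsf{deg}(u))\big)$$ for every node $u$.
   Context: $|T|$ is the number of nodes of $T$, $\mathsf{deg}(u)$ is the number of children of $u$, and $|\ell(u)|$ is the length of the string $\ell(u)$. *)

theory Defs
  imports Complex_Main
begin

text \<open>Rooted (finite) trees: a node with a list of child subtrees.
  Nodes of a tree are addressed by their positions (paths from the root,
  a path being the list of child indices taken).\<close>

datatype rtree = Node "rtree list"

fun children :: "rtree \<Rightarrow> rtree list" where
  "children (Node ts) = ts"

fun subtree_at :: "rtree \<Rightarrow> nat list \<Rightarrow> rtree option" where
  "subtree_at t [] = Some t"
| "subtree_at (Node ts) (i # p) =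
     (if i < length ts then subtree_at (ts ! i) p else None)"

definition nodes :: "rtree \<Rightarrow> nat list set" where
  "nodes T = {p. subtree_at T p \<noteq> None}"

definition deg :: "rtree \<Rightarrow> nat list \<Rightarrow> nat" where
  "deg T u = length (children (the (subtree_at T u)))"

end

theory Submission imports Defs begin

lemma subtree_snoc:
  "subtree_at T (u @ [i]) = (case subtree_at T u of None \<Rightarrow> None
     | Some t \<Rightarrow> if i < length (children t) then Some (children t ! i) else None)"
proof (induction u arbitrary: T)
  case Nil then show ?case by (cases T) auto
next
  case (Cons a u) then show ?case by (cases T) auto
qed

lemma nodes_Node:
  "nodes (Node ts) = insert [] (\<Union>i<length ts. (Cons i) ` nodes (ts!i))"
proof -
  have "p \<in> nodes (Node ts) \<longleftrightarrow> p \<in> insert [] (\<Union>i<length ts. (Cons i) ` nodes (ts!i))" for p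
    by (cases p) (auto simp: nodes_def)
  then show ?thesis by blast
qed

lemma finite_nodes: "finite (nodes T)"
proof (induction T)
  case (Node ts)
  then show ?case by (simp add: nodes_Node)
qed

lemma sum_deg: "(\<Sum>u\<in>nodes T. deg T u) \<le> card (nodes T)"
proof -
  let ?S = "Sigma (nodes T) (\<lambda>u. {..<deg T u})"
  have "(\<Sum>u\<in>nodes T. deg T u) = card ?S"
    using finite_nodes by (simp add: card_SigmaI)
  also have "card ?S \<le> card (nodes T)"
  proof (rule card_inj_on_le[where f="\<lambda>(u,i). u @ [i]"])
    show "inj_on (\<lambda>(u,i). u @ [i]) ?S" by (auto simp: inj_on_def)
    show "(\<lambda>(u,i). u @ [i]) ` ?S \<subseteq> nodes T"
      by (auto simp: nodes_def deg_def subtree_snoc split: option.splits)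
    show "finite (nodes T)" by (rule finite_nodes)
  qed
  finally show ?thesis .
qed

fun bits :: "nat \<Rightarrow> bool list" where
  "bits n = (if n = 0 then [] else odd n # bits (n div 2))"
declare bits.simps[simp del]

lemma bits_inj: "bits m = bits n \<Longrightarrow> m = n"
proof (induction m arbitrary: n rule: less_induct)
  case (less m)
  show ?case
  proof (cases "m = 0")
    case True then show ?thesis using less.prems by (subst (asm) (1 2) bits.simps) (auto split: if_splits)
  next
    case False
    then have n0: "n \<noteq> 0" using less.prems by (subst (asm) (1 2) bits.simps) (auto split: if_splits)
    with False less.prems have "odd m = odd n" "bits (m div 2) = bits (n div 2)"
      by (subst (asm) (1 2) bits.simps; simp)+
    with less.IH[of "m div 2" "n div 2"] False have "m div 2 = n div 2" by simp
    with \<open>odd m = odd n\<close> show ?thesis by presburger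
  qed
qed

lemma bits_len: "m > 0 \<Longrightarrow> 2 ^ (length (bits m) - 1) \<le> m"
proof (induction m rule: less_induct)
  case (less m)
  show ?case
  proof (cases "m div 2 = 0")
    case True then show ?thesis using less.prems by (subst bits.simps) (simp add: bits.simps)
  next
    case False
    then have "2 ^ (length (bits (m div 2)) - 1) \<le> m div 2" using less by simp
    moreover have "length (bits (m div 2)) \<ge> 1" using False by (subst bits.simps) simp
    ultimately have "2 ^ (length (bits (m div 2))) \<le> m"
    proof -
      assume a: "2 ^ (length (bits (m div 2)) - 1) \<le> m div 2" and b: "length (bits (m div 2)) \<ge> 1"
      have "2 ^ (length (bits (m div 2))) = 2 * 2 ^ (length (bits (m div 2)) - 1)"
        using b by (cases "length (bits (m div 2))") auto
      also have "\<dots> \<le> 2 * (m div 2)" using a by simp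
      also have "\<dots> \<le> m" by simp
      finally show ?thesis .
    qed
    then show ?thesis using less.prems
      by (subst bits.simps) simp
  qed
qed

lemma bits_len_real: "m > 0 \<Longrightarrow> real (length (bits m)) \<le> 1 + log 2 (real m)"
proof -
  assume m: "m > 0"
  have "m div 2 < m \<or> True" by simp
  have L: "length (bits m) \<ge> 1" using m by (subst bits.simps) simp
  have "real (2 ^ (length (bits m) - 1)) \<le> real m" using bits_len[OF m] by linarith
  then have "log 2 (2 ^ (length (bits m) - 1)) \<le> log 2 (real m)"
    using m by (subst log_le_cancel_iff) auto
  then have "real (length (bits m) - 1) \<le> log 2 (real m)" by (simp add: log_nat_power)
  then show ?thesis using L by linarith
qed

theorem lemma9:
  fixes T :: rtree
  shows "\<exists>lbl :: nat list \<Rightarrow> bool list.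
           inj_on lbl (nodes T) \<and>
           (\<forall>u \<in> nodes T.
              real (length (lbl u)) \<le> 2 + log 2 (real (card (nodes T)) / (1 + real (deg T u))))"
proof -
  obtain L where dL: "distinct L" "set L = nodes T" using finite_distinct_list[OF finite_nodes] by blast
  define key where "key u = - int (deg T u)" for u
  define xs where "xs = sort_key key L"
  have dx: "distinct xs" "set xs = nodes T" using dL by (auto simp: xs_def)
  have sx: "sorted (map key xs)" by (simp add: xs_def)
  define n where "n = card (nodes T)"
  have nl: "n = length xs" using dx by (simp add: n_def distinct_card[symmetric])
  have bij: "bij_betw (nth xs) {..<n} (nodes T)"
    using dx nl by (intro bij_betw_nth) auto
  define g where "g = inv_into {..<n} (nth xs)"
  have bg: "bij_betw g (nodes T) {..<n}" unfolding g_def by (rule bij_betw_inv_into[OF bij])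
  have total: "(\<Sum>j<n. 1 + deg T (xs!j)) \<le> 2 * n"
  proof -
    have "(\<Sum>j<n. 1 + deg T (xs!j)) = (\<Sum>v\<in>nodes T. 1 + deg T v)"
      using sum.reindex_bij_betw[OF bij, of "\<lambda>v. 1 + deg T v"] by simp
    also have "\<dots> = n + (\<Sum>v\<in>nodes T. deg T v)" by (simp add: sum_Suc n_def)
    also have "\<dots> \<le> 2 * n" using sum_deg[of T] by (simp add: n_def)
    finally show ?thesis .
  qed
  have key_bound: "(g u + 1) * (1 + deg T u) \<le> 2 * n" if u: "u \<in> nodes T" for u
  proof -
    let ?i = "g u"
    have i: "?i < n" using bg u by (auto simp: bij_betw_def)
    have xi: "xs ! ?i = u" unfolding g_def using bij u
      by (meson bij_betw_inv_into_right)
    have mono: "deg T u \<le> deg T (xs!j)" if "j \<le> ?i" for j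
    proof -
      have "map key xs ! j \<le> map key xs ! ?i"
        using sorted_nth_mono[OF sx, of j ?i] that i nl by simp
      then show ?thesis using that i nl xi by (simp add: key_def)
    qed
    have "(g u + 1) * (1 + deg T u) = (\<Sum>j\<le>?i. 1 + deg T u)" by simp
    also have "\<dots> \<le> (\<Sum>j\<le>?i. 1 + deg T (xs!j))" by (rule sum_mono) (use mono in auto)
    also have "\<dots> \<le> (\<Sum>j<n. 1 + deg T (xs!j))"
      by (rule sum_mono2) (use i in auto)
    finally show ?thesis using total by linarith
  qed
  show ?thesis
  proof (intro exI[of _ "\<lambda>u. bits (Suc (g u))"] conjI ballI)
    show "inj_on (\<lambda>u. bits (Suc (g u))) (nodes T)"
      using bg by (auto simp: inj_on_def bij_betw_def dest: bits_inj)
  next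
    fix u assume u: "u \<in> nodes T"
    have kb0: "real ((g u + 1) * (1 + deg T u)) \<le> real (2 * n)"
      using key_bound[OF u] by (simp only: of_nat_le_iff)
    have kb: "real (g u + 1) * (1 + real (deg T u)) \<le> 2 * real n"
      using kb0 by (simp add: algebra_simps)
    have "n > 0" using u finite_nodes[of T] by (auto simp: n_def card_gt_0_iff)
    then have np: "real n > 0" by simp
    have le: "real (g u + 1) \<le> 2 * (real n / (1 + real (deg T u)))"
      using kb by (simp add: field_simps)
    have "log 2 (real (g u + 1)) \<le> log 2 (2 * (real n / (1 + real (deg T u))))"
      using le np by (subst log_le_cancel_iff) auto
    also have "\<dots> = 1 + log 2 (real n / (1 + real (deg T u)))"
      using np by (subst log_mult) auto
    finally have "log 2 (real (Suc (g u))) \<le> 1 + log 2 (real n / (1 + real (deg T u)))" by simp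
    moreover have "real (length (bits (Suc (g u)))) \<le> 1 + log 2 (real (Suc (g u)))"
      by (rule bits_len_real) simp
    ultimately show "real (length (bits (Suc (g u)))) \<le> 2 + log 2 (real (card (nodes T)) / (1 + real (deg T u)))"
      by (simp add: n_def)
  qed
qed

end
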